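(* Let $k\geq 3$ and let $G$ be a diregular $(2,k,+3)$-digraph. Let $u,v$ be distinct vertices with exactly one common out-neighbour $u_2$, and write $N^+(u)=\{u_1,u_2\}$, $N^+(v)=\{v_1,u_2\}$. Let $w\in T(v_1)$ with $d(v_1,w)=l$, and suppose also $w\in T(u_1)$ with $d(u_1,w)=m$. Then either $m\leq l$ or $w\in N^{k-1}(u_1)$. Symmetrically, if $w\in T(u_1)\cap T(v_1)$ with $d(u_1,w)=l$ and $d(v_1,w)=m$, then either $m\leq l$ or $w\in N^{k-1}(v_1)$.
   Context: A digraph is $k$-geodetic if for every ordered pair of vertices $x,y$ there is at most one directed path from $x$ to $y$ of length at most $k$ (the trivial path counts). A diregular $(2,k,+3)$-digraph is a $k$-geodetic digraph of order $1+2+\dots+2^k+3$ in which every vertex has in- and out-degree $2$. $N^+(x)$ is the set of out-neighbours of $x$; $N^l(x)$ is the set of end-vertices of directed paths of length $l$ starting at $x$. $d(x,y)$ is the directed distance. $T(x)=\{y: d(x,y)\leq k-1\}$. *)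

theory Defs
  imports Main
begin

text \<open>A directed path of length l from x to y is a vertex sequence xs of length l+1
  with consecutive arcs (the trivial path is [x]).\<close>

definition is_walk :: "'a set \<Rightarrow> ('a \<Rightarrow> 'a \<Rightarrow> bool) \<Rightarrow> 'a list \<Rightarrow> 'a \<Rightarrow> 'a \<Rightarrow> nat \<Rightarrow> bool" where
  "is_walk V A xs x y l \<longleftrightarrow> length xs = Suc l \<and> hd xs = x \<and> last xs = y \<and> set xs \<subseteq> V
     \<and> (\<forall>i < l. A (xs ! i) (xs ! Suc i))"

definition k_geodetic :: "'a set \<Rightarrow> ('a \<Rightarrow> 'a \<Rightarrow> bool) \<Rightarrow> nat \<Rightarrow> bool" where
  "k_geodetic V A k \<longleftrightarrow> (\<forall>x\<in>V. \<forall>y\<in>V. \<forall>p q l1 l2. l1 \<le> k \<and> l2 \<le> k \<and>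
      is_walk V A p x y l1 \<and> is_walk V A q x y l2 \<longrightarrow> p = q)"

definition out_nbrs :: "'a set \<Rightarrow> ('a \<Rightarrow> 'a \<Rightarrow> bool) \<Rightarrow> 'a \<Rightarrow> 'a set" where
  "out_nbrs V A x = {y\<in>V. A x y}"

definition in_nbrs :: "'a set \<Rightarrow> ('a \<Rightarrow> 'a \<Rightarrow> bool) \<Rightarrow> 'a \<Rightarrow> 'a set" where
  "in_nbrs V A x = {y\<in>V. A y x}"

definition is_2k3_digraph :: "'a set \<Rightarrow> ('a \<Rightarrow> 'a \<Rightarrow> bool) \<Rightarrow> nat \<Rightarrow> bool" where
  "is_2k3_digraph V A k \<longleftrightarrow> finite V \<and> (\<forall>x y. A x y \<longrightarrow> x \<in> V \<and> y \<in> V)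
     \<and> k_geodetic V A k
     \<and> (\<forall>x\<in>V. card (out_nbrs V A x) = 2 \<and> card (in_nbrs V A x) = 2)
     \<and> card V = (\<Sum>i\<le>k. 2 ^ i) + 3"

definition Nl :: "'a set \<Rightarrow> ('a \<Rightarrow> 'a \<Rightarrow> bool) \<Rightarrow> nat \<Rightarrow> 'a \<Rightarrow> 'a set" where
  "Nl V A l x = {y. \<exists>xs. is_walk V A xs x y l}"

definition dist :: "'a set \<Rightarrow> ('a \<Rightarrow> 'a \<Rightarrow> bool) \<Rightarrow> 'a \<Rightarrow> 'a \<Rightarrow> nat" where
  "dist V A x y = (LEAST l. y \<in> Nl V A l x)"

definition Tset :: "'a set \<Rightarrow> ('a \<Rightarrow> 'a \<Rightarrow> bool) \<Rightarrow> nat \<Rightarrow> 'a \<Rightarrow> 'a set" where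
  "Tset V A k x = {y. \<exists>l\<le>k - 1. y \<in> Nl V A l x}"

end

theory Submission
  imports Defs
begin

lemma Nl0: "y \<in> Nl V A 0 x \<longleftrightarrow> x \<in> V \<and> y = x"
proof
  assume "y \<in> Nl V A 0 x"
  then obtain xs where w: "is_walk V A xs x y 0" by (auto simp: Nl_def)
  then obtain a where "xs = [a]" by (auto simp: is_walk_def length_Suc_conv)
  with w show "x \<in> V \<and> y = x" by (auto simp: is_walk_def)
next
  assume "x \<in> V \<and> y = x"
  then have "is_walk V A [x] x y 0" by (auto simp: is_walk_def)
  then show "y \<in> Nl V A 0 x" by (auto simp: Nl_def)
qed

lemma walk_V: "is_walk V A xs x y l \<Longrightarrow> x \<in> V \<and> y \<in> V"
  unfolding is_walk_def
  by (metis hd_in_set last_in_set list.size(3) nat.distinct(1) subsetD)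

lemma Nl_V: "y \<in> Nl V A l x \<Longrightarrow> x \<in> V \<and> y \<in> V"
  unfolding Nl_def using walk_V by fast

lemma walk_cons:
  assumes "is_walk V A p y z l" "A x y" "x \<in> V"
  shows "is_walk V A (x # p) x z (Suc l)"
proof -
  have ne: "p \<noteq> []" using assms(1) by (auto simp: is_walk_def)
  have h0: "p ! 0 = y" using assms(1) ne by (auto simp: is_walk_def hd_conv_nth)
  show ?thesis unfolding is_walk_def
  proof (intro conjI allI impI)
    fix i assume "i < Suc l"
    then show "A ((x # p) ! i) ((x # p) ! Suc i)"
      using assms h0 by (cases i) (auto simp: is_walk_def)
  qed (use assms ne in \<open>auto simp: is_walk_def\<close>)
qed

lemma walk_snoc:
  assumes "is_walk V A p x y l" "A y z" "z \<in> V"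
  shows "is_walk V A (p @ [z]) x z (Suc l)"
proof -
  have ne: "p \<noteq> []" and len: "length p = Suc l" using assms(1) by (auto simp: is_walk_def)
  have hl: "p ! l = y" using assms(1) ne by (auto simp: is_walk_def last_conv_nth)
  show ?thesis unfolding is_walk_def
  proof (intro conjI allI impI)
    fix i assume i: "i < Suc l"
    show "A ((p @ [z]) ! i) ((p @ [z]) ! Suc i)"
    proof (cases "i < l")
      case True
      then show ?thesis using assms(1) len by (auto simp: is_walk_def nth_append)
    next
      case False
      then have "i = l" using i by simp
      then show ?thesis using hl len assms(2) by (auto simp: nth_append)
    qed
  qed (use assms ne in \<open>auto simp: is_walk_def\<close>)
qed

lemma walk_dec:
  assumes "is_walk V A xs x z (Suc l)"
  shows "\<exists>y. A x y \<and> is_walk V A (tl xs) y z l"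
proof -
  obtain a ys where xs: "xs = a # ys" using assms by (auto simp: is_walk_def length_Suc_conv)
  have a: "a = x" using assms xs by (auto simp: is_walk_def)
  have ne: "ys \<noteq> []" using assms xs by (auto simp: is_walk_def)
  have "A (xs ! 0) (xs ! 1)" using assms by (auto simp: is_walk_def)
  then have Ax: "A x (hd ys)" using xs a ne by (simp add: hd_conv_nth)
  have "is_walk V A ys (hd ys) z l"
    unfolding is_walk_def
  proof (intro conjI allI impI)
    fix i assume "i < l"
    then have "A (xs ! Suc i) (xs ! Suc (Suc i))" using assms by (auto simp: is_walk_def)
    then show "A (ys ! i) (ys ! Suc i)" using xs by simp
  qed (use assms xs ne in \<open>auto simp: is_walk_def\<close>)
  then show ?thesis using Ax xs by auto
qed

lemma Nl_first:
  assumes AV: "\<forall>x y. A x y \<longrightarrow> x \<in> V \<and> y \<in> V"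
  shows "z \<in> Nl V A (Suc l) x \<longleftrightarrow> (\<exists>y. A x y \<and> z \<in> Nl V A l y)"
proof
  assume "z \<in> Nl V A (Suc l) x"
  then obtain xs where "is_walk V A xs x z (Suc l)" by (auto simp: Nl_def)
  then show "\<exists>y. A x y \<and> z \<in> Nl V A l y" using walk_dec unfolding Nl_def by fast
next
  assume "\<exists>y. A x y \<and> z \<in> Nl V A l y"
  then obtain y p where "A x y" "is_walk V A p y z l" by (auto simp: Nl_def)
  then have "is_walk V A (x # p) x z (Suc l)" using walk_cons AV by metis
  then show "z \<in> Nl V A (Suc l) x" by (auto simp: Nl_def)
qed

lemma Nl_Suc:
  assumes AV: "\<forall>x y. A x y \<longrightarrow> x \<in> V \<and> y \<in> V"
  shows "z \<in> Nl V A (Suc l) x \<longleftrightarrow> (\<exists>y. y \<in> Nl V A l x \<and> A y z)"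
proof
  assume "\<exists>y. y \<in> Nl V A l x \<and> A y z"
  then obtain y p where "A y z" "is_walk V A p x y l" by (auto simp: Nl_def)
  then have "is_walk V A (p @ [z]) x z (Suc l)" using walk_snoc AV by metis
  then show "z \<in> Nl V A (Suc l) x" by (auto simp: Nl_def)
next
  show "z \<in> Nl V A (Suc l) x \<Longrightarrow> \<exists>y. y \<in> Nl V A l x \<and> A y z"
  proof (induction l arbitrary: x)
    case 0
    then obtain y where "A x y" "z \<in> Nl V A 0 y" using Nl_first[OF AV] by blast
    then show ?case using AV Nl0 by metis
  next
    case (Suc l)
    then obtain y where y: "A x y" "z \<in> Nl V A (Suc l) y" using Nl_first[OF AV] by blast
    then obtain y' where "y' \<in> Nl V A l y" "A y' z" using Suc.IH by blast
    then show ?case using y Nl_first[OF AV] AV by blast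
  qed
qed

lemma Nl_trans:
  assumes AV: "\<forall>x y. A x y \<longrightarrow> x \<in> V \<and> y \<in> V"
  shows "y \<in> Nl V A a x \<Longrightarrow> z \<in> Nl V A b y \<Longrightarrow> z \<in> Nl V A (a + b) x"
proof (induction b arbitrary: z)
  case 0
  then show ?case using Nl0 by (metis add_0_right)
next
  case (Suc b)
  then obtain z' where "z' \<in> Nl V A b y" "A z' z" using Nl_Suc[OF AV] by blast
  then show ?case using Suc Nl_Suc[OF AV] by (metis add_Suc_right)
qed

lemma geo_len:
  assumes geo: "k_geodetic V A k"
    and "z \<in> Nl V A i x" "z \<in> Nl V A j x" "i \<le> k" "j \<le> k"
  shows "i = j"
proof -
  obtain p q where p: "is_walk V A p x z i" and q: "is_walk V A q x z j"
    using assms by (auto simp: Nl_def)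
  have "x \<in> V" "z \<in> V" using walk_V[OF p] by auto
  then have "p = q" using geo p q assms(4,5) unfolding k_geodetic_def by blast
  then show ?thesis using p q by (auto simp: is_walk_def)
qed

lemma geo_pred:
  assumes AV: "\<forall>x y. A x y \<longrightarrow> x \<in> V \<and> y \<in> V" and geo: "k_geodetic V A k"
    and "y \<in> Nl V A j x" "y' \<in> Nl V A j x" "A y z" "A y' z" "Suc j \<le> k"
  shows "y = y'"
proof -
  obtain p q where p: "is_walk V A p x y j" and q: "is_walk V A q x y' j"
    using assms by (auto simp: Nl_def)
  have zV: "z \<in> V" using AV assms by blast
  have p': "is_walk V A (p @ [z]) x z (Suc j)" using walk_snoc p assms zV by metis
  have q': "is_walk V A (q @ [z]) x z (Suc j)" using walk_snoc q assms zV by metis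
  have "x \<in> V" using walk_V[OF p] by auto
  then have "p @ [z] = q @ [z]" using geo p' q' zV assms(7) unfolding k_geodetic_def by blast
  then have "p = q" by simp
  then show ?thesis using p q by (auto simp: is_walk_def)
qed

lemma geo_first:
  assumes AV: "\<forall>x y. A x y \<longrightarrow> x \<in> V \<and> y \<in> V" and geo: "k_geodetic V A k"
    and "A x y" "A x y'" "z \<in> Nl V A i y" "z \<in> Nl V A j y'" "Suc i \<le> k" "Suc j \<le> k"
  shows "y = y'"
proof -
  obtain p q where p: "is_walk V A p y z i" and q: "is_walk V A q y' z j"
    using assms by (auto simp: Nl_def)
  have xV: "x \<in> V" using AV assms by blast
  have p': "is_walk V A (x # p) x z (Suc i)" using walk_cons p assms xV by metis
  have q': "is_walk V A (x # q) x z (Suc j)" using walk_cons q assms xV by metis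
  have "z \<in> V" using walk_V[OF p] by auto
  then have "x # p = x # q" using geo p' q' xV assms(7,8) unfolding k_geodetic_def by blast
  then have "p = q" by simp
  then show ?thesis using p q by (auto simp: is_walk_def)
qed

lemma card_Nl:
  assumes AV: "\<forall>x y. A x y \<longrightarrow> x \<in> V \<and> y \<in> V" and geo: "k_geodetic V A k"
    and fin: "finite V" and deg: "\<forall>x\<in>V. card (out_nbrs V A x) = 2"
    and xV: "x \<in> V"
  shows "j \<le> k \<Longrightarrow> card (Nl V A j x) = 2 ^ j"
proof (induction j)
  case 0
  have "Nl V A 0 x = {x}" using xV by (auto simp: Nl0)
  then show ?case by simp
next
  case (Suc j)
  have eq: "Nl V A (Suc j) x = (\<Union>y\<in>Nl V A j x. out_nbrs V A y)"
  proof (rule set_eqI)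
    fix z
    show "z \<in> Nl V A (Suc j) x \<longleftrightarrow> z \<in> (\<Union>y\<in>Nl V A j x. out_nbrs V A y)"
      unfolding Nl_Suc[OF AV] out_nbrs_def using AV by auto
  qed
  have sub: "Nl V A j x \<subseteq> V" using Nl_V by (meson subsetI)
  have finI: "finite (Nl V A j x)" using finite_subset[OF sub fin] .
  have "card (\<Union>y\<in>Nl V A j x. out_nbrs V A y) = (\<Sum>y\<in>Nl V A j x. card (out_nbrs V A y))"
  proof (rule card_UN_disjoint[OF finI])
    show "\<forall>i\<in>Nl V A j x. finite (out_nbrs V A i)" using fin unfolding out_nbrs_def by auto
    show "\<forall>i\<in>Nl V A j x. \<forall>j'\<in>Nl V A j x. i \<noteq> j' \<longrightarrow> out_nbrs V A i \<inter> out_nbrs V A j' = {}"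
    proof (intro ballI impI)
      fix y y' assume yy: "y \<in> Nl V A j x" "y' \<in> Nl V A j x" "y \<noteq> y'"
      show "out_nbrs V A y \<inter> out_nbrs V A y' = {}"
      proof (rule ccontr)
        assume "out_nbrs V A y \<inter> out_nbrs V A y' \<noteq> {}"
        then obtain z where "A y z" "A y' z" unfolding out_nbrs_def by auto
        then have "y = y'" using geo_pred[OF AV geo yy(1) yy(2) _ _ Suc.prems] by blast
        then show False using yy by simp
      qed
    qed
  qed
  also have "\<dots> = (\<Sum>y\<in>Nl V A j x. 2)"
  proof (rule sum.cong)
    fix y assume "y \<in> Nl V A j x"
    then have "y \<in> V" using Nl_V[of y V A j x] by simp
    then show "card (out_nbrs V A y) = 2" using deg by blast
  qed simp
  also have "\<dots> = 2 * 2 ^ j" using Suc by simp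
  finally show ?case using eq by simp
qed

lemma card_T:
  assumes AV: "\<forall>x y. A x y \<longrightarrow> x \<in> V \<and> y \<in> V" and geo: "k_geodetic V A k"
    and fin: "finite V" and deg: "\<forall>x\<in>V. card (out_nbrs V A x) = 2"
    and xV: "x \<in> V" and jk: "j \<le> k"
  shows "card (\<Union>i\<in>{..j}. Nl V A i x) = (\<Sum>i\<le>j. 2 ^ i)"
proof -
  have "card (\<Union>i\<in>{..j}. Nl V A i x) = (\<Sum>i\<le>j. card (Nl V A i x))"
  proof (rule card_UN_disjoint)
    show "\<forall>i\<in>{..j}. finite (Nl V A i x)"
    proof
      fix i
      have "Nl V A i x \<subseteq> V" using Nl_V by (meson subsetI)
      then show "finite (Nl V A i x)" using finite_subset fin by blast
    qed
    show "\<forall>i\<in>{..j}. \<forall>j'\<in>{..j}. i \<noteq> j' \<longrightarrow> Nl V A i x \<inter> Nl V A j' x = {}"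
    proof (intro ballI impI)
      fix i j' assume "i \<in> {..j}" "j' \<in> {..j}" "i \<noteq> j'"
      then have "i \<le> k" "j' \<le> k" using jk by auto
      then show "Nl V A i x \<inter> Nl V A j' x = {}" using geo_len[OF geo] \<open>i \<noteq> j'\<close> by blast
    qed
  qed simp
  also have "\<dots> = (\<Sum>i\<le>j. 2 ^ i)"
    using card_Nl[OF AV geo fin deg xV] jk by (intro sum.cong) auto
  finally show ?thesis .
qed

lemma Tset_eq: "Tset V A k x = (\<Union>i\<in>{..k-1}. Nl V A i x)"
  unfolding Tset_def by auto

lemma claimA:
  assumes AV: "\<forall>x y. A x y \<longrightarrow> x \<in> V \<and> y \<in> V" and geo: "k_geodetic V A k"
    and oa: "out_nbrs V A a = {a1, c}" and "A b b1" "A b c" "b1 \<noteq> c"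
    and "x \<in> Tset V A k b1" "x \<notin> Tset V A k a1" "x \<in> Nl V A i a" "i \<le> k"
  shows "x = a"
proof (cases i)
  case 0
  then show ?thesis using assms(9) by (simp add: Nl0)
next
  case (Suc i')
  then obtain z where z: "A a z" "x \<in> Nl V A i' z" using Nl_first[OF AV] assms by blast
  then have "z \<in> out_nbrs V A a" using AV unfolding out_nbrs_def by auto
  then have "z = a1 \<or> z = c" using oa by auto
  moreover have "z \<noteq> a1" using z assms Suc unfolding Tset_def by auto
  moreover obtain l' where "l' \<le> k - 1" "x \<in> Nl V A l' b1" using assms unfolding Tset_def by auto
  ultimately have "b1 = c"
  proof -
    assume "z = a1 \<or> z = c" "z \<noteq> a1" "l' \<le> k - 1" "x \<in> Nl V A l' b1"
    then have "z = c" by simp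
    have k1: "Suc l' \<le> k" using \<open>l' \<le> k - 1\<close> Suc \<open>i \<le> k\<close> by linarith
    have k2: "Suc i' \<le> k" using Suc \<open>i \<le> k\<close> by simp
    show "b1 = c" using geo_first[OF AV geo \<open>A b b1\<close> \<open>A b c\<close> \<open>x \<in> Nl V A l' b1\<close> _ k1 k2]
      z \<open>z = c\<close> by blast
  qed
  then show ?thesis using assms by simp
qed

lemma Tset_V: "Tset V A k x \<subseteq> V"
proof
  fix y assume "y \<in> Tset V A k x"
  then obtain l where "y \<in> Nl V A l x" unfolding Tset_def by blast
  then show "y \<in> V" using Nl_V[of y V A l x] by simp
qed

lemma core:
  assumes AV: "\<forall>x y. A x y \<longrightarrow> x \<in> V \<and> y \<in> V" and geo: "k_geodetic V A k"
    and fin: "finite V" and deg: "\<forall>x\<in>V. card (out_nbrs V A x) = 2"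
    and cV: "card V = (\<Sum>i\<le>k. 2 ^ i) + 3"
    and uV: "u \<in> V" and vV: "v \<in> V"
    and ou: "out_nbrs V A u = {u1, u2}" and ov: "out_nbrs V A v = {v1, u2}"
    and n12: "u1 \<noteq> u2" and nv12: "v1 \<noteq> u2"
    and wl: "w \<in> Nl V A l v1" and wm: "w \<in> Nl V A m u1" and lm: "l < m" and mk: "m + 2 \<le> k"
  shows False
proof -
  have Au1: "A u u1" and Au2: "A u u2" using ou unfolding out_nbrs_def by auto
  have Av1: "A v v1" and Av2: "A v u2" using ov unfolding out_nbrs_def by auto
  have u1V: "u1 \<in> V" and v1V: "v1 \<in> V" and wV: "w \<in> V" using AV Au1 Av1 Nl_V[OF wl] by auto
  define Tu where "Tu = (\<Union>i\<in>{..k}. Nl V A i u)"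
  define Tv where "Tv = (\<Union>i\<in>{..k}. Nl V A i v)"
  have NV: "\<And>i x. Nl V A i x \<subseteq> V" using Nl_V by (meson subsetI)
  have TuV: "Tu \<subseteq> V" unfolding Tu_def using NV by (simp add: UN_subset_iff)
  have TvV: "Tv \<subseteq> V" unfolding Tv_def using NV by (simp add: UN_subset_iff)
  have cTu: "card Tu = (\<Sum>i\<le>k. 2 ^ i)" unfolding Tu_def using card_T[OF AV geo fin deg uV] by simp
  have cTv: "card Tv = (\<Sum>i\<le>k. 2 ^ i)" unfolding Tv_def using card_T[OF AV geo fin deg vV] by simp
  have cOu: "card (V - Tu) = 3"
    using card_Diff_subset[OF finite_subset[OF TuV fin] TuV] cTu cV by simp
  have cOv: "card (V - Tv) = 3"
    using card_Diff_subset[OF finite_subset[OF TvV fin] TvV] cTv cV by simp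
  define S where "S = Tset V A k v1 - Tset V A k u1"
  define S' where "S' = Tset V A k u1 - Tset V A k v1"
  have finS: "finite S" unfolding S_def using finite_subset[OF Tset_V fin] by simp
  have finS': "finite S'" unfolding S'_def using finite_subset[OF Tset_V fin] by simp
  have SO: "S \<subseteq> insert u (V - Tu)"
  proof
    fix x assume xS: "x \<in> S"
    then have x1: "x \<in> Tset V A k v1" and x2: "x \<notin> Tset V A k u1" unfolding S_def by simp_all
    then have xV: "x \<in> V" using Tset_V[of V A k v1] by blast
    show "x \<in> insert u (V - Tu)"
    proof (cases "x \<in> Tu")
      case True
      then obtain i where i1: "i \<le> k" and i2: "x \<in> Nl V A i u" unfolding Tu_def by auto
      have "x = u" using claimA[OF AV geo ou Av1 Av2 nv12 x1 x2 i2 i1] .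
      then show ?thesis by simp
    qed (use xV in auto)
  qed
  have S'O: "S' \<subseteq> insert v (V - Tv)"
  proof
    fix x assume xS: "x \<in> S'"
    then have x1: "x \<in> Tset V A k u1" and x2: "x \<notin> Tset V A k v1" unfolding S'_def by simp_all
    then have xV: "x \<in> V" using Tset_V[of V A k u1] by blast
    show "x \<in> insert v (V - Tv)"
    proof (cases "x \<in> Tv")
      case True
      then obtain i where i1: "i \<le> k" and i2: "x \<in> Nl V A i v" unfolding Tv_def by auto
      have "x = v" using claimA[OF AV geo ov Au1 Au2 n12 x1 x2 i2 i1] .
      then show ?thesis by simp
    qed (use xV in auto)
  qed
  have cS: "card S \<le> 4"
  proof -
    have "card S \<le> card (insert u (V - Tu))" using card_mono[OF _ SO] fin by simp
    also have "\<dots> \<le> card (V - Tu) + 1" using fin by (simp add: card_insert_if)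
    finally show ?thesis using cOu by simp
  qed
  define t where "t = k - m"
  have t2: "t \<ge> 2" and tk: "t \<le> k" and mt: "m + t = k" using mk unfolding t_def by auto
  define X where "X = Nl V A t w"
  have cX: "card X = 2 ^ t" unfolding X_def using card_Nl[OF AV geo fin deg wV tk] .
  have "(2::nat) ^ 2 \<le> 2 ^ t" using t2 by (rule power_increasing) simp
  then have cX4: "card X \<ge> 4" using cX by simp
  have XS: "X \<subseteq> S"
  proof
    fix x assume "x \<in> X"
    then have xw: "x \<in> Nl V A t w" unfolding X_def .
    have x1: "x \<in> Nl V A (l + t) v1" using Nl_trans[OF AV wl xw] .
    have x2: "x \<in> Nl V A k u1" using Nl_trans[OF AV wm xw] mt by simp
    have "l + t \<le> k - 1" using lm mt by simp
    then have "x \<in> Tset V A k v1" using x1 unfolding Tset_def by blast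
    moreover have "x \<notin> Tset V A k u1"
    proof
      assume "x \<in> Tset V A k u1"
      then obtain j where "j \<le> k - 1" "x \<in> Nl V A j u1" unfolding Tset_def by blast
      then have "j = k" using geo_len[OF geo _ x2] by simp
      then show False using \<open>j \<le> k - 1\<close> mk by simp
    qed
    ultimately show "x \<in> S" unfolding S_def by blast
  qed
  have "card X \<le> card S" using card_mono[OF finS XS] .
  then have XeqS: "X = S" and cS4: "card S = 4"
    using card_subset_eq[OF finS XS] cS cX4 by auto
  have "v1 \<notin> X"
  proof
    assume "v1 \<in> X"
    then have a: "v1 \<in> Nl V A (l + t) v1" using Nl_trans[OF AV wl] unfolding X_def by blast
    have b: "v1 \<in> Nl V A 0 v1" using v1V by (simp add: Nl0)
    have "l + t = 0" using geo_len[OF geo a b] lm mt by simp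
    then show False using t2 by simp
  qed
  moreover have "v1 \<in> Tset V A k v1" using v1V unfolding Tset_def by (auto simp: Nl0)
  ultimately have "v1 \<in> Tset V A k u1" using XeqS unfolding S_def by blast
  then obtain b where bk: "b \<le> k - 1" and vb: "v1 \<in> Nl V A b u1" unfolding Tset_def by blast
  have cTs: "card (Tset V A k u1) = card (Tset V A k v1)"
    unfolding Tset_eq using card_T[OF AV geo fin deg u1V] card_T[OF AV geo fin deg v1V] by simp
  have "card S' = card S"
  proof -
    have f1: "finite (Tset V A k u1)" "finite (Tset V A k v1)"
      using finite_subset[OF Tset_V fin] by auto
    have "card S' = card (Tset V A k u1) - card (Tset V A k u1 \<inter> Tset V A k v1)"
      unfolding S'_def by (rule card_Diff_subset_Int) (use f1 in simp)
    also have "\<dots> = card (Tset V A k v1) - card (Tset V A k v1 \<inter> Tset V A k u1)"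
      using cTs by (simp add: Int_commute)
    also have "\<dots> = card S"
      unfolding S_def by (rule card_Diff_subset_Int[symmetric]) (use f1 in simp)
    finally show ?thesis .
  qed
  then have cS'4: "card S' = 4" using cS4 by simp
  have "v \<in> S'"
  proof (rule ccontr)
    assume "v \<notin> S'"
    then have "S' \<subseteq> V - Tv" using S'O by blast
    then have "card S' \<le> card (V - Tv)" using card_mono fin by blast
    then show False using cS'4 cOv by simp
  qed
  then have "v \<in> Tset V A k u1" unfolding S'_def by blast
  then obtain j where jk: "j \<le> k - 1" and vj: "v \<in> Nl V A j u1" unfolding Tset_def by blast
  have "v1 \<in> Nl V A (Suc j) u1" using Nl_Suc[OF AV] vj Av1 by blast
  then have "Suc j = b" using geo_len[OF geo _ vb] jk bk mk by simp
  then have j2: "Suc (Suc j) \<le> k" using bk mk by simp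
  have "u2 \<in> Nl V A (Suc j) u1" using Nl_Suc[OF AV] vj Av2 by blast
  then have e1: "u2 \<in> Nl V A (Suc (Suc j)) u" using Nl_first[OF AV] Au1 by blast
  have "u2 \<in> Nl V A 0 u2" using AV Au2 by (simp add: Nl0)
  then have e2: "u2 \<in> Nl V A (Suc 0) u" using Nl_first[OF AV] Au2 by blast
  have "Suc (Suc j) = Suc 0" using geo_len[OF geo e1 e2] j2 mk by simp
  then show False by simp
qed

theorem lemma4:
  fixes V :: "'a set" and A :: "'a \<Rightarrow> 'a \<Rightarrow> bool" and k :: nat
    and u v u1 u2 v1 w :: 'a
  assumes "k \<ge> 3"
    and "is_2k3_digraph V A k"
    and "u \<in> V" and "v \<in> V" and "u \<noteq> v"
    and "out_nbrs V A u \<inter> out_nbrs V A v = {u2}"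
    and "out_nbrs V A u = {u1, u2}"
    and "out_nbrs V A v = {v1, u2}"
  shows "(w \<in> Tset V A k v1 \<and> w \<in> Tset V A k u1 \<longrightarrow>
           dist V A u1 w \<le> dist V A v1 w \<or> w \<in> Nl V A (k - 1) u1)
       \<and> (w \<in> Tset V A k u1 \<and> w \<in> Tset V A k v1 \<longrightarrow>
           dist V A v1 w \<le> dist V A u1 w \<or> w \<in> Nl V A (k - 1) v1)"
proof -
  have AV: "\<forall>x y. A x y \<longrightarrow> x \<in> V \<and> y \<in> V" and geo: "k_geodetic V A k"
    and fin: "finite V" and deg: "\<forall>x\<in>V. card (out_nbrs V A x) = 2"
    and cV: "card V = (\<Sum>i\<le>k. 2 ^ i) + 3"
    using assms(2) unfolding is_2k3_digraph_def by auto
  have "card (out_nbrs V A u) = 2" using deg assms(3) by blast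
  then have "card {u1, u2} = 2" using assms(7) by simp
  then have n12: "u1 \<noteq> u2" by (cases "u1 = u2") auto
  have "card (out_nbrs V A v) = 2" using deg assms(4) by blast
  then have "card {v1, u2} = 2" using assms(8) by simp
  then have nv12: "v1 \<noteq> u2" by (cases "v1 = u2") auto
  have gen: "dist V A x1 w \<le> dist V A y1 w \<or> w \<in> Nl V A (k - 1) x1"
    if h1: "w \<in> Tset V A k y1" and h2: "w \<in> Tset V A k x1"
       and h3: "x \<in> V" "y \<in> V" "out_nbrs V A x = {x1, u2}" "out_nbrs V A y = {y1, u2}"
       "x1 \<noteq> u2" "y1 \<noteq> u2" for x y x1 y1
  proof (rule ccontr)
    assume neg: "\<not> (dist V A x1 w \<le> dist V A y1 w \<or> w \<in> Nl V A (k - 1) x1)"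
    define l where "l = dist V A y1 w"
    define m where "m = dist V A x1 w"
    have "\<exists>l0. l0 \<le> k - 1 \<and> w \<in> Nl V A l0 y1" using h1 unfolding Tset_def by simp
    then obtain l0 where l0: "l0 \<le> k - 1" "w \<in> Nl V A l0 y1" by (elim exE conjE)
    have wl: "w \<in> Nl V A l y1" unfolding l_def dist_def by (rule LeastI[where P="\<lambda>l. w \<in> Nl V A l y1", OF l0(2)])
    have "\<exists>m0. m0 \<le> k - 1 \<and> w \<in> Nl V A m0 x1" using h2 unfolding Tset_def by simp
    then obtain m0 where m0: "m0 \<le> k - 1" "w \<in> Nl V A m0 x1" by (elim exE conjE)
    have wm: "w \<in> Nl V A m x1" unfolding m_def dist_def by (rule LeastI[where P="\<lambda>l. w \<in> Nl V A l x1", OF m0(2)])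
    have "m \<le> m0" unfolding m_def dist_def using m0(2) by (rule Least_le)
    moreover have "m \<noteq> k - 1" using neg wm by auto
    ultimately have mk: "m + 2 \<le> k" using m0 assms(1) by linarith
    have lm: "l < m" using neg unfolding l_def m_def by simp
    show False using core[OF AV geo fin deg cV h3 wl wm lm mk] .
  qed
  show ?thesis
  proof (intro conjI impI)
    assume "w \<in> Tset V A k v1 \<and> w \<in> Tset V A k u1"
    then show "dist V A u1 w \<le> dist V A v1 w \<or> w \<in> Nl V A (k - 1) u1"
      using gen[OF _ _ assms(3) assms(4) assms(7) assms(8) n12 nv12] by simp
  next
    assume "w \<in> Tset V A k u1 \<and> w \<in> Tset V A k v1"
    then show "dist V A v1 w \<le> dist V A u1 w \<or> w \<in> Nl V A (k - 1) v1"
      using gen[OF _ _ assms(4) assms(3) assms(8) assms(7) nv12 n12] by simp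
  qed
qed

end
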